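(* Let $\mathcal{G}=(\mathcal{V},\mathcal{E},w)$ be a simple connected weighted graph with at least two vertices, $s\in\mathcal{V}$, $\beta\in(0,1)$. Let $\dot{\mathcal{V}}\subsetneq\mathcal{V}$ be a subset with $s\in\dot{\mathcal{V}}$ that contains every neighbour of $s$ and induces a connected subgraph. Let $T^\infty=\beta D^\infty+D^{-1}L$ where $D^\infty$ is diagonal with $D^\infty_{vv}=d(v)$ for $v\in\dot{\mathcal{V}}$ and $D^\infty_{vv}=0$ otherwise, and let $x$ solve $T^\infty x=\beta r$ with $r$ the indicator vector of $s$. Then every vertex at which $x$ attains its maximum equals $s$, and $x(s)<1/d(s)$.
   Context: $d(v)=\sum_{u\sim v}w(u,v)$ is the weighted degree, $D=\operatorname{diag}(d(v))$, $A$ the weighted adjacency matrix, $L=D-A$. $r(s)=1$, $r(v)=0$ for $v\ne s$. *)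

theory Defs
  imports Complex_Main
begin

definition weighted_graph :: "'a set \<Rightarrow> ('a \<Rightarrow> 'a \<Rightarrow> real) \<Rightarrow> bool" where
  "weighted_graph V w \<longleftrightarrow> finite V \<and>
     (\<forall>u v. w u v = w v u) \<and> (\<forall>u v. w u v \<ge> 0) \<and> (\<forall>v. w v v = 0) \<and>
     (\<forall>u v. w u v \<noteq> 0 \<longrightarrow> u \<in> V \<and> v \<in> V)"

definition adj :: "('a \<Rightarrow> 'a \<Rightarrow> real) \<Rightarrow> 'a \<Rightarrow> 'a \<Rightarrow> bool" where
  "adj w u v \<longleftrightarrow> w u v > 0"

definition connected_on :: "('a \<Rightarrow> 'a \<Rightarrow> real) \<Rightarrow> 'a set \<Rightarrow> bool" where
  "connected_on w S \<longleftrightarrow>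
     (\<forall>u\<in>S. \<forall>v\<in>S. (\<lambda>a b. a \<in> S \<and> b \<in> S \<and> adj w a b)\<^sup>*\<^sup>* u v)"

definition wdeg :: "'a set \<Rightarrow> ('a \<Rightarrow> 'a \<Rightarrow> real) \<Rightarrow> 'a \<Rightarrow> real" where
  "wdeg V w v = (\<Sum>u\<in>V. w u v)"

definition lap_apply :: "'a set \<Rightarrow> ('a \<Rightarrow> 'a \<Rightarrow> real) \<Rightarrow> ('a \<Rightarrow> real) \<Rightarrow> 'a \<Rightarrow> real" where
  "lap_apply V w x v = wdeg V w v * x v - (\<Sum>u\<in>V. w v u * x u)"

definition Tinf_apply :: "'a set \<Rightarrow> ('a \<Rightarrow> 'a \<Rightarrow> real) \<Rightarrow> real \<Rightarrow> 'a set \<Rightarrow> ('a \<Rightarrow> real) \<Rightarrow> 'a \<Rightarrow> real" where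
  "Tinf_apply V w \<beta> Vd x v =
     \<beta> * (if v \<in> Vd then wdeg V w v else 0) * x v + lap_apply V w x v / wdeg V w v"

definition indicator_vec :: "'a \<Rightarrow> 'a \<Rightarrow> real" where
  "indicator_vec s v = (if v = s then 1 else 0)"

end

theory Submission
  imports Defs
begin

lemma path_lemma:
  assumes path: "(\<lambda>a b. a \<in> V \<and> b \<in> V \<and> adj w a b)\<^sup>*\<^sup>* a s"
    and sym: "\<forall>u v. w u v = w v u"
    and s_Vd: "s \<in> Vd"
    and nbrs: "\<forall>u. adj w s u \<longrightarrow> u \<in> Vd"
    and closed: "\<And>a b. S a \<Longrightarrow> a \<notin> Vd \<Longrightarrow> a \<in> V \<Longrightarrow> b \<in> V \<Longrightarrow> adj w a b \<Longrightarrow> S b"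
  shows "S a \<Longrightarrow> a \<notin> Vd \<Longrightarrow> a \<in> V \<Longrightarrow> \<exists>b. S b \<and> b \<in> Vd \<and> b \<noteq> s \<and> b \<in> V"
  using path
proof (induction rule: converse_rtranclp_induct)
  case base
  then show ?case using s_Vd by auto
next
  case (step a b)
  then have ab: "a \<in> V" "b \<in> V" "adj w a b" by auto
  have Sb: "S b" using closed[OF step.prems(1,2) ab] .
  show ?case
  proof (cases "b \<in> Vd")
    case True
    have "b \<noteq> s"
    proof
      assume "b = s"
      then have "adj w s a" using ab sym by (simp add: adj_def)
      then show False using nbrs step.prems by auto
    qed
    then show ?thesis using True Sb ab by auto
  next
    case False
    then show ?thesis using step.IH Sb ab by auto
  qed
qed

lemma pos_mult_nonpos: "c > 0 \<Longrightarrow> c * y \<le> 0 \<Longrightarrow> y \<le> (0::real)"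
  by (simp add: mult_le_0_iff)

theorem mainTheorem9:
  fixes V :: "'a set" and w :: "'a \<Rightarrow> 'a \<Rightarrow> real" and s :: 'a and \<beta> :: real
    and Vd :: "'a set" and x :: "'a \<Rightarrow> real"
  assumes graph: "weighted_graph V w"
    and conn: "connected_on w V"
    and two: "card V \<ge> 2"
    and sV: "s \<in> V"
    and beta: "0 < \<beta>" "\<beta> < 1"
    and Vd_sub: "Vd \<subset> V"
    and s_Vd: "s \<in> Vd"
    and nbrs: "\<forall>u. adj w s u \<longrightarrow> u \<in> Vd"
    and Vd_conn: "connected_on w Vd"
    and sol: "\<forall>v\<in>V. Tinf_apply V w \<beta> Vd x v = \<beta> * indicator_vec s v"
  shows "(\<forall>v\<in>V. (\<forall>u\<in>V. x u \<le> x v) \<longrightarrow> v = s) \<and> x s < 1 / wdeg V w s"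
proof -
  define d where "d = wdeg V w"
  define L where "L = lap_apply V w x"
  have fin: "finite V" and sym: "\<forall>u v. w u v = w v u" and wnn: "\<forall>u v. w u v \<ge> 0"
    and wdiag: "\<forall>v. w v v = 0" and wsupp: "\<forall>u v. w u v \<noteq> 0 \<longrightarrow> u \<in> V \<and> v \<in> V"
    using graph unfolding weighted_graph_def by auto
  have path: "\<And>a b. a \<in> V \<Longrightarrow> b \<in> V \<Longrightarrow> (\<lambda>a b. a \<in> V \<and> b \<in> V \<and> adj w a b)\<^sup>*\<^sup>* a b"
    using conn unfolding connected_on_def by auto
  have adjV: "\<And>a b. adj w a b \<Longrightarrow> a \<in> V \<and> b \<in> V"
    using wsupp unfolding adj_def by (metis less_irrefl)
  have dpos: "d v > 0" if vV: "v \<in> V" for v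
  proof -
    have "\<exists>u\<in>V. u \<noteq> v"
    proof (rule ccontr)
      assume "\<not> ?thesis"
      then have "V \<subseteq> {v}" by auto
      then have "card V \<le> card {v}" by (intro card_mono) auto
      then have "card V \<le> 1" by simp
      then show False using two by simp
    qed
    then obtain u where uV: "u \<in> V" "u \<noteq> v" by auto
    have "(\<lambda>a b. a \<in> V \<and> b \<in> V \<and> adj w a b)\<^sup>*\<^sup>* v u" using path vV uV by auto
    then obtain b where "adj w v b"
      using uV(2) by (metis (no_types, lifting) converse_rtranclpE)
    then have wb: "w b v > 0" and bV: "b \<in> V" using sym adjV unfolding adj_def by auto
    have "w b v \<le> (\<Sum>u\<in>V. w u v)"
      using fin bV wnn by (intro member_le_sum) auto
    then show ?thesis using wb unfolding d_def wdeg_def by linarith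
  qed
  have dsym: "d v = (\<Sum>u\<in>V. w v u)" for v
    unfolding d_def wdeg_def using sym by simp
  have Lsum: "L v = (\<Sum>u\<in>V. w v u * (x v - x u))" for v
  proof -
    have "L v = d v * x v - (\<Sum>u\<in>V. w v u * x u)"
      unfolding L_def lap_apply_def d_def by simp
    also have "\<dots> = (\<Sum>u\<in>V. w v u * x v) - (\<Sum>u\<in>V. w v u * x u)"
      by (simp add: dsym sum_distrib_right)
    also have "\<dots> = (\<Sum>u\<in>V. w v u * (x v - x u))"
      by (simp add: sum_subtractf right_diff_distrib)
    finally show ?thesis .
  qed
  have Lmax: "L v \<ge> 0" if "\<forall>u\<in>V. x u \<le> x v" for v
    unfolding Lsum using that wnn by (intro sum_nonneg) auto
  have Lmax0: "x u = x v" if "\<forall>u\<in>V. x u \<le> x v" "L v = 0" "adj w v u" for u v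
  proof -
    have nn: "\<forall>u\<in>V. w v u * (x v - x u) \<ge> 0" using that(1) wnn by auto
    have s0: "(\<Sum>u\<in>V. w v u * (x v - x u)) = 0" using that(2) Lsum by simp
    have "\<forall>u\<in>V. w v u * (x v - x u) = 0"
      using s0 by (subst (asm) sum_nonneg_eq_0_iff[OF fin]) (use nn in auto)
    moreover have "u \<in> V" "w v u > 0" using adjV that(3) unfolding adj_def by auto
    ultimately show ?thesis by auto
  qed
  have Lmin: "L v \<le> 0" if "\<forall>u\<in>V. x v \<le> x u" for v
    unfolding Lsum using that wnn by (intro sum_nonpos) (auto intro: mult_nonneg_nonpos)
  have Lmin0: "x u = x v" if "\<forall>u\<in>V. x v \<le> x u" "L v = 0" "adj w v u" for u v
  proof -
    have nn: "\<forall>u\<in>V. w v u * (x u - x v) \<ge> 0" using that(1) wnn by auto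
    have "(\<Sum>u\<in>V. w v u * (x u - x v)) = - (\<Sum>u\<in>V. w v u * (x v - x u))"
      by (simp add: sum_negf[symmetric] algebra_simps)
    then have "(\<Sum>u\<in>V. w v u * (x u - x v)) = 0"
      using that(2) unfolding Lsum by simp
    then have "\<forall>u\<in>V. w v u * (x u - x v) = 0"
      by (subst (asm) sum_nonneg_eq_0_iff[OF fin]) (use nn in auto)
    moreover have "u \<in> V" "w v u > 0" using adjV that(3) unfolding adj_def by auto
    ultimately show ?thesis by auto
  qed
  have eq: "\<beta> * (if v \<in> Vd then d v else 0) * x v * d v + L v = \<beta> * indicator_vec s v * d v"
    if vV: "v \<in> V" for v
  proof -
    have "\<beta> * (if v \<in> Vd then d v else 0) * x v + L v / d v = \<beta> * indicator_vec s v"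
      using sol vV unfolding Tinf_apply_def d_def L_def by auto
    then have "(\<beta> * (if v \<in> Vd then d v else 0) * x v + L v / d v) * d v = \<beta> * indicator_vec s v * d v"
      by simp
    then show ?thesis using dpos[OF vV] by (simp add: distrib_right)
  qed
  have eqout: "L v = 0" if "v \<in> V" "v \<notin> Vd" for v
  proof -
    have "v \<noteq> s" using that s_Vd by auto
    then show ?thesis using eq[OF that(1)] that(2) by (simp add: indicator_vec_def)
  qed
  have Vne: "V \<noteq> {}" using sV by auto
  have "Min (x ` V) \<in> x ` V" using fin Vne by (intro Min_in) auto
  then obtain m where mV: "m \<in> V" and mdef: "x m = Min (x ` V)" by force
  have mmin: "\<forall>u\<in>V. x m \<le> x u" unfolding mdef using fin by auto
  have "\<exists>m'. m' \<in> V \<and> m' \<in> Vd \<and> (\<forall>u\<in>V. x m' \<le> x u)"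
  proof (cases "m \<in> Vd")
    case True then show ?thesis using mV mmin by auto
  next
    case False
    let ?S = "\<lambda>a. a \<in> V \<and> (\<forall>u\<in>V. x a \<le> x u)"
    have "\<exists>b. ?S b \<and> b \<in> Vd \<and> b \<noteq> s \<and> b \<in> V"
    proof (rule path_lemma[OF path[OF mV sV] sym s_Vd nbrs])
      fix a b assume "?S a" "a \<notin> Vd" "a \<in> V" "b \<in> V" "adj w a b"
      then show "?S b" using Lmin0[of a b] eqout[of a] by auto
    qed (use False mV mmin in auto)
    then show ?thesis by blast
  qed
  then obtain m' where m'V: "m' \<in> V" "m' \<in> Vd" and m'min: "\<forall>u\<in>V. x m' \<le> x u" by blast
  have xm': "x m' \<ge> 0"
  proof -
    have Lm: "L m' \<le> 0" using Lmin m'min by auto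
    have e: "\<beta> * d m' * x m' * d m' + L m' = \<beta> * indicator_vec s m' * d m'"
      using eq[OF m'V(1)] m'V(2) by simp
    have r: "\<beta> * indicator_vec s m' * d m' \<ge> 0" using beta dpos[OF m'V(1)] by (simp add: indicator_vec_def)
    have "\<beta> * d m' * x m' * d m' \<ge> 0" using e Lm r by linarith
    then have "\<beta> * d m' * d m' * x m' \<ge> 0" by (simp add: mult_ac)
    moreover have "\<beta> * d m' * d m' > 0" using beta dpos[OF m'V(1)] by simp
    ultimately show ?thesis by (simp add: zero_le_mult_iff)
  qed
  have xnn: "\<forall>u\<in>V. x u \<ge> 0" using xm' m'min by force
  have nomax: False if vV: "v \<in> V" "v \<in> Vd" "v \<noteq> s" and vmax: "\<forall>u\<in>V. x u \<le> x v" for v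
  proof -
    have Lv: "L v \<ge> 0" using Lmax vmax by auto
    have e: "\<beta> * d v * x v * d v + L v = 0"
      using eq[OF vV(1)] vV by (simp add: indicator_vec_def)
    have "\<beta> * d v * d v * x v \<le> 0" using e Lv by (simp add: algebra_simps)
    moreover have "\<beta> * d v * d v > 0" using beta dpos[OF vV(1)] by simp
    ultimately have "x v \<le> 0" using pos_mult_nonpos by blast
    then have z: "\<forall>u\<in>V. x u = 0" using vmax xnn by force
    have "L s = 0" unfolding Lsum using z sV by simp
    then have "0 = \<beta> * d s" using eq[OF sV] z sV by (simp add: indicator_vec_def)
    then show False using beta dpos[OF sV] by simp
  qed
  have part1: "\<forall>v\<in>V. (\<forall>u\<in>V. x u \<le> x v) \<longrightarrow> v = s"
  proof (intro ballI impI)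
    fix v assume vV: "v \<in> V" and vmax: "\<forall>u\<in>V. x u \<le> x v"
    show "v = s"
    proof (rule ccontr)
      assume ns: "v \<noteq> s"
      show False
      proof (cases "v \<in> Vd")
        case True then show False using nomax vV ns vmax by blast
      next
        case False
        let ?S = "\<lambda>a. a \<in> V \<and> (\<forall>u\<in>V. x u \<le> x a)"
        have "\<exists>b. ?S b \<and> b \<in> Vd \<and> b \<noteq> s \<and> b \<in> V"
        proof (rule path_lemma[OF path[OF vV sV] sym s_Vd nbrs])
          fix a b assume "?S a" "a \<notin> Vd" "a \<in> V" "b \<in> V" "adj w a b"
          then show "?S b" using Lmax0[of a b] eqout[of a] by auto
        qed (use False vV vmax in auto)
        then show False using nomax by blast
      qed
    qed
  qed
  have "Max (x ` V) \<in> x ` V" using fin Vne by (intro Max_in) auto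
  then obtain M where MV: "M \<in> V" and Mdef: "x M = Max (x ` V)" by force
  have Mmax: "\<forall>u\<in>V. x u \<le> x M" unfolding Mdef using fin by auto
  have "M = s" using part1 MV Mmax by auto
  then have smax: "\<forall>u\<in>V. x u \<le> x s" using Mmax by simp
  have Ls: "L s > 0"
  proof -
    have "L s \<ge> 0" using Lmax smax by auto
    moreover have "L s \<noteq> 0"
    proof
      assume L0: "L s = 0"
      have "\<exists>u\<in>V. w u s \<noteq> 0"
      proof (rule ccontr)
        assume "\<not> ?thesis"
        then have "d s = 0" unfolding d_def wdeg_def by simp
        then show False using dpos[OF sV] by simp
      qed
      then obtain u where uV: "u \<in> V" "w u s \<noteq> 0" by auto
      then have au: "adj w s u" using wnn sym unfolding adj_def by (metis less_eq_real_def)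
      have "u \<noteq> s" using uV wdiag by auto
      moreover have "x u = x s" using Lmax0[OF smax L0 au] .
      then have "\<forall>v\<in>V. x v \<le> x u" using smax by simp
      ultimately show False using part1 uV by auto
    qed
    ultimately show ?thesis by simp
  qed
  have e: "\<beta> * d s * x s * d s + L s = \<beta> * d s"
    using eq[OF sV] s_Vd by (simp add: indicator_vec_def)
  have ds: "d s > 0" using dpos[OF sV] .
  have "\<beta> * d s * (d s * x s) < \<beta> * d s * 1" using e Ls by (simp add: algebra_simps)
  then have "d s * x s < 1" using beta ds by (simp add: mult_less_cancel_left)
  then have "x s < 1 / d s" using ds by (simp add: field_simps)
  then show ?thesis using part1 unfolding d_def by simp
qed

end
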